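(* Let $A$ and $B$ be commutative rings with identity and let $\phi:A\to B$ be a surjective ring homomorphism with $\ker(\phi)=\langle\pi\rangle$ for some $\pi\in A$. If $B$ is a principal ideal ring, then for every ideal $I$ of $A$ there exists $a\in I$ such that $$I=\langle a\rangle+\pi(I:\pi).$$
   Context: For ideals $I,J$ of a commutative ring $R$, $(I:J)=\{x\in R: xJ\subseteq I\}$, and $(I:a)=(I:\langle a\rangle)$. *)

theory Defs
  imports "HOL-Algebra.Algebra"
begin

definition colon_ideal :: "('a, 'm) ring_scheme \<Rightarrow> 'a set \<Rightarrow> 'a set \<Rightarrow> 'a set" where
  "colon_ideal R I J = {x \<in> carrier R. \<forall>y \<in> J. x \<otimes>\<^bsub>R\<^esub> y \<in> I}"

definition principal_ideal_ring :: "('a, 'm) ring_scheme \<Rightarrow> bool" where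
  "principal_ideal_ring R \<longleftrightarrow> cring R \<and> (\<forall>J. ideal J R \<longrightarrow> principalideal J R)"

end

theory Submission
  imports Defs
begin

lemma img_ideal:
  assumes "ring_hom_ring A B h" "h ` carrier A = carrier B" "ideal I A"
  shows "ideal (h ` I) B"
proof -
  interpret H: ring_hom_ring A B h by fact
  interpret I: ideal I A by fact
  have Ic: "\<And>x. x \<in> I \<Longrightarrow> x \<in> carrier A" using I.Icarr by blast
  show ?thesis
  proof (rule idealI[OF H.S.ring_axioms])
    show "subgroup (h ` I) (add_monoid B)"
    proof
      show "h ` I \<subseteq> carrier (add_monoid B)" using Ic by auto
      show "\<one>\<^bsub>add_monoid B\<^esub> \<in> h ` I"
        using I.additive_subgroup_axioms additive_subgroup.zero_closed H.hom_zero
        by (metis image_eqI monoid.select_convs(2))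
    next
      fix x y assume "x \<in> h ` I" "y \<in> h ` I"
      then obtain a b where ab: "a \<in> I" "b \<in> I" "x = h a" "y = h b" by auto
      then have "h (a \<oplus>\<^bsub>A\<^esub> b) = x \<oplus>\<^bsub>B\<^esub> y" using Ic by simp
      moreover have "a \<oplus>\<^bsub>A\<^esub> b \<in> I" using ab I.a_closed by blast
      ultimately show "x \<otimes>\<^bsub>add_monoid B\<^esub> y \<in> h ` I" by (metis image_eqI monoid.select_convs(1))
      have "h (\<ominus>\<^bsub>A\<^esub> a) = \<ominus>\<^bsub>B\<^esub> x" using ab Ic by simp
      moreover have "\<ominus>\<^bsub>A\<^esub> a \<in> I" using ab I.a_inv_closed by blast
      ultimately show "inv\<^bsub>add_monoid B\<^esub> x \<in> h ` I" by (metis image_eqI a_inv_def)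
    qed
  next
    fix x r assume "x \<in> h ` I" "r \<in> carrier B"
    then obtain a s where as: "a \<in> I" "s \<in> carrier A" "x = h a" "r = h s" using assms(2) by blast
    have "h (s \<otimes>\<^bsub>A\<^esub> a) = r \<otimes>\<^bsub>B\<^esub> x" using as Ic by simp
    moreover have "s \<otimes>\<^bsub>A\<^esub> a \<in> I" using as I.I_l_closed by blast
    ultimately show "r \<otimes>\<^bsub>B\<^esub> x \<in> h ` I" by (metis image_eqI)
    have "h (a \<otimes>\<^bsub>A\<^esub> s) = x \<otimes>\<^bsub>B\<^esub> r" using as Ic by simp
    moreover have "a \<otimes>\<^bsub>A\<^esub> s \<in> I" using as I.I_r_closed by blast
    ultimately show "x \<otimes>\<^bsub>B\<^esub> r \<in> h ` I" by (metis image_eqI)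
  qed
qed

theorem corollary2p2:
  fixes A :: "('a, 'm) ring_scheme" and B :: "('b, 'n) ring_scheme"
    and \<phi> :: "'a \<Rightarrow> 'b" and \<pi> :: 'a
  assumes "cring A" and "cring B"
    and "\<phi> \<in> ring_hom A B"
    and "\<phi> ` carrier A = carrier B"
    and "\<pi> \<in> carrier A"
    and "a_kernel A B \<phi> = PIdl\<^bsub>A\<^esub> \<pi>"
    and "principal_ideal_ring B"
  shows "\<forall>I. ideal I A \<longrightarrow>
           (\<exists>a \<in> I. I = (PIdl\<^bsub>A\<^esub> a) <+>\<^bsub>A\<^esub>
                         ((\<lambda>x. \<pi> \<otimes>\<^bsub>A\<^esub> x) ` colon_ideal A I (PIdl\<^bsub>A\<^esub> \<pi>)))"
proof (intro allI impI)
  fix I assume "ideal I A"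
  interpret A: cring A by fact
  interpret B: cring B by fact
  interpret I: ideal I A by fact
  have hr: "ring_hom_ring A B \<phi>"
    using assms(3) A.ring_axioms B.ring_axioms by (simp add: ring_hom_ringI2)
  interpret H: ring_hom_ring A B \<phi> by fact
  have Ic: "\<And>x. x \<in> I \<Longrightarrow> x \<in> carrier A" using I.Icarr by blast
  have "ideal (\<phi> ` I) B" using img_ideal[OF hr assms(4)] \<open>ideal I A\<close> .
  then have "principalideal (\<phi> ` I) B" using assms(7) unfolding principal_ideal_ring_def by blast
  then obtain b where b: "b \<in> carrier B" "\<phi> ` I = Idl\<^bsub>B\<^esub> {b}"
    using principalideal.generate by blast
  then have bP: "\<phi> ` I = PIdl\<^bsub>B\<^esub> b" using B.cgenideal_eq_genideal by simp
  have "b \<in> \<phi> ` I" using bP B.cgenideal_self b(1) by simp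
  then obtain a where a: "a \<in> I" "\<phi> a = b" by auto
  have ac: "a \<in> carrier A" using a Ic by blast
  show "\<exists>a \<in> I. I = (PIdl\<^bsub>A\<^esub> a) <+>\<^bsub>A\<^esub>
                         ((\<lambda>x. \<pi> \<otimes>\<^bsub>A\<^esub> x) ` colon_ideal A I (PIdl\<^bsub>A\<^esub> \<pi>))"
  proof (intro bexI[OF _ a(1)] equalityI subsetI)
    fix x assume x: "x \<in> I"
    have "\<phi> x \<in> \<phi> ` I" using x by (rule imageI)
    then have "\<phi> x \<in> PIdl\<^bsub>B\<^esub> b" using bP by simp
    then obtain c where c: "c \<in> carrier B" "\<phi> x = c \<otimes>\<^bsub>B\<^esub> b" unfolding cgenideal_def by blast
    then have "c \<in> \<phi> ` carrier A" using assms(4) by simp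
    then obtain r where r: "r \<in> carrier A" "\<phi> r = c" by (auto elim!: imageE)
    have xc: "x \<in> carrier A" using x Ic by blast
    have "\<phi> (x \<ominus>\<^bsub>A\<^esub> r \<otimes>\<^bsub>A\<^esub> a) = \<zero>\<^bsub>B\<^esub>"
      using xc r ac a c b(1) by (simp add: a_minus_def B.r_neg)
    then have "x \<ominus>\<^bsub>A\<^esub> r \<otimes>\<^bsub>A\<^esub> a \<in> PIdl\<^bsub>A\<^esub> \<pi>"
      using assms(6) xc r ac unfolding a_kernel_def' by auto
    then obtain s where s: "s \<in> carrier A" "x \<ominus>\<^bsub>A\<^esub> r \<otimes>\<^bsub>A\<^esub> a = s \<otimes>\<^bsub>A\<^esub> \<pi>"
      unfolding cgenideal_def by blast
    have xe: "x = r \<otimes>\<^bsub>A\<^esub> a \<oplus>\<^bsub>A\<^esub> \<pi> \<otimes>\<^bsub>A\<^esub> s"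
    proof -
      have "x = r \<otimes>\<^bsub>A\<^esub> a \<oplus>\<^bsub>A\<^esub> (x \<ominus>\<^bsub>A\<^esub> r \<otimes>\<^bsub>A\<^esub> a)"
        using xc r ac by (simp add: a_minus_def A.add.m_lcomm A.r_neg)
      also have "\<dots> = r \<otimes>\<^bsub>A\<^esub> a \<oplus>\<^bsub>A\<^esub> \<pi> \<otimes>\<^bsub>A\<^esub> s"
        using s assms(5) by (simp add: A.m_comm)
      finally show ?thesis .
    qed
    have psI: "\<pi> \<otimes>\<^bsub>A\<^esub> s \<in> I"
    proof -
      have "r \<otimes>\<^bsub>A\<^esub> a \<in> I" using r a I.I_l_closed by blast
      then have "x \<ominus>\<^bsub>A\<^esub> r \<otimes>\<^bsub>A\<^esub> a \<in> I" using x unfolding a_minus_def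
        by (meson I.a_closed I.a_inv_closed)
      then show ?thesis using s assms(5) by (simp add: A.m_comm)
    qed
    have sC: "s \<in> colon_ideal A I (PIdl\<^bsub>A\<^esub> \<pi>)"
      unfolding colon_ideal_def cgenideal_def
    proof (intro CollectI conjI ballI s(1))
      fix y assume "y \<in> {t \<otimes>\<^bsub>A\<^esub> \<pi> |t. t \<in> carrier A}"
      then obtain t where t: "t \<in> carrier A" "y = t \<otimes>\<^bsub>A\<^esub> \<pi>" by blast
      have "s \<otimes>\<^bsub>A\<^esub> y = t \<otimes>\<^bsub>A\<^esub> (\<pi> \<otimes>\<^bsub>A\<^esub> s)" using t s assms(5) by (simp add: A.m_comm A.m_lcomm)
      then show "s \<otimes>\<^bsub>A\<^esub> y \<in> I" using psI t I.I_l_closed by simp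
    qed
    have "r \<otimes>\<^bsub>A\<^esub> a \<in> PIdl\<^bsub>A\<^esub> a" using r unfolding cgenideal_def by blast
    then show "x \<in> (PIdl\<^bsub>A\<^esub> a) <+>\<^bsub>A\<^esub>
                         ((\<lambda>x. \<pi> \<otimes>\<^bsub>A\<^esub> x) ` colon_ideal A I (PIdl\<^bsub>A\<^esub> \<pi>))"
      using xe sC unfolding set_add_def' by blast
  next
    fix x assume "x \<in> (PIdl\<^bsub>A\<^esub> a) <+>\<^bsub>A\<^esub>
                         ((\<lambda>x. \<pi> \<otimes>\<^bsub>A\<^esub> x) ` colon_ideal A I (PIdl\<^bsub>A\<^esub> \<pi>))"
    then obtain u s where us: "u \<in> PIdl\<^bsub>A\<^esub> a" "s \<in> colon_ideal A I (PIdl\<^bsub>A\<^esub> \<pi>)"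
      "x = u \<oplus>\<^bsub>A\<^esub> \<pi> \<otimes>\<^bsub>A\<^esub> s"
      unfolding set_add_def' by blast
    have "u \<in> I" using us(1) A.cgenideal_minimal[OF \<open>ideal I A\<close> a(1)] by blast
    moreover have "\<pi> \<in> PIdl\<^bsub>A\<^esub> \<pi>" using A.cgenideal_self assms(5) by blast
    then have "s \<otimes>\<^bsub>A\<^esub> \<pi> \<in> I" using us(2) unfolding colon_ideal_def by blast
    then have "\<pi> \<otimes>\<^bsub>A\<^esub> s \<in> I" using us(2) assms(5) unfolding colon_ideal_def by (simp add: A.m_comm)
    ultimately show "x \<in> I" using us(3) I.a_closed by simp
  qed
qed

end
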